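(* Let $\varphi\in\mathcal{L}$. If there is a multi-agent graded belief model (MAGBM) $(S,U)$ with $(S,U)\models\varphi$, then there is a quasi-notional graded doxastic model (QNGDM) $M$ and a world $w$ of $M$ with $(M,w)\models\varphi$.
   Context: Fix a countably infinite set of atoms $\mathit{Atm}$ and a finite set of agents $\mathit{Agt}=\{1,\dots,n\}$; a group is a non-empty subset $J\subseteq\mathit{Agt}$, $2^{\mathit{Agt}*}$ the set of groups. $\mathbb{N}_0$ (resp. $\mathbb{N}_1$) are the naturals with (resp. without) $0$; $\mathbb{N}_0^{\omega}=\mathbb{N}_0\cup\{\omega\}$, $\mathbb{N}_1^{\omega}=\mathbb{N}_1\cup\{\omega\}$ with $\omega$ infinite. A multiset over $X$ is a function $X\to\mathbb{N}_0^{\omega}$. A possibly infinite sum of grades equals the sum of its non-zero summands if there are finitely many and none is $\omega$, and $\omega$ otherwise. For $k\in\mathbb{N}_0$ and group $J$, $P(J,k)$ is the set of $\delta:J\to\mathbb{N}_0$ with $\sum_{i\in J}\delta(i)=k$. $\mathcal{L}_0$: $\alpha::=p\mid\neg\alpha\mid\alpha\wedge\alpha\mid\triangle_i^k\alpha$ ($p\in\mathit{Atm}$, $i\in\mathit{Agt}$, $k\in\mathbb{N}_1^{\omega}$). $\mathcal{L}$: $\varphi::=\alpha\mid\neg\varphi\mid\varphi\wedge\varphi\mid\Box_J^k\varphi$ ($\alpha\in\mathcal{L}_0$, $J$ a group, $k\in\mathbb{N}_0$). MAGBM semantics: a state is $S=(\mathcal{B}_1,\dots,\mathcal{B}_n,V)$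 with each $\mathcal{B}_i$ a multiset over $\mathcal{L}_0$ and $V\subseteq\mathit{Atm}$; $\mathbf{S}$ is the set of states. $S\models p$ iff $p\in V$; Boolean clauses as usual; $S\models\triangle_i^k\alpha$ iff $\mathcal{B}_i(\alpha)\ge k$. For a group $J$, $\mathcal{B}_J(\alpha)=\sum_{i\in J}\mathcal{B}_i(\alpha)$; for $k\in\mathbb{N}_0$, $S\mathcal{R}_J^kS'$ iff $\sum_{\alpha\in\mathcal{L}_0,S'\not\models\alpha}\mathcal{B}_J(\alpha)\le k$. An MAGBM is a pair $(S,U)$ with $S\in\mathbf{S}$, $U\subseteq\mathbf{S}$; $(S,U)\models\alpha$ iff $S\models\alpha$ for $\alpha\in\mathcal{L}_0$; Boolean clauses as usual; $(S,U)\models\Box_J^k\varphi$ iff for all $S'\in U$ with $S\mathcal{R}_J^kS'$, $(S',U)\models\varphi$. QNGDM: a tuple $M=(W,\mathcal{D},\rho,\mathcal{V})$ with $W$ a set of worlds, $\mathcal{D}:\mathit{Agt}\times W\to$ (multisets over $\mathcal{L}_0$), $\rho:2^{\mathit{Agt}*}\times W\times W\to\mathbb{N}_0^{\omega}$, $\mathcal{V}:\mathit{Atm}\to2^W$, with satisfaction $(M,w)\models p$ iff $w\in\mathcal{V}(p)$; Boolean clauses as usual; $(M,w)\models\triangle_i^k\alpha$ iff $\mathcal{D}(i,w)(\alpha)\ge k$; $(M,w)\models\Box_J^k\varphi$ iff for all $u\in W$ with $\rho(J,w,u)\le k$, $(M,u)\models\varphi$; and such that for every group $J$ and $w,u\in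 W$ with $\rho(J,w,u)\ne\omega$: (i) $\rho(J,w,u)\ge\sum_{\alpha\in\mathcal{L}_0,(M,u)\not\models\alpha}\sum_{i\in J}\mathcal{D}(i,w)(\alpha)$; (ii) there is $\delta\in P(J,\rho(J,w,u))$ with $\sum_{i\in J'}\delta(i)\ge\rho(J',w,u)$ for every non-empty $J'\subset J$. *)

theory Defs
  imports Main "HOL-Library.Extended_Nat"
begin

typedef grade1 = "{k::enat. 1 \<le> k}"
  by (rule exI[of _ 1]) simp

typedef 'ag grp = "{J::'ag set. J \<noteq> {}}"
  by auto

datatype 'ag fml0 =
    Atom nat
  | Neg0 "'ag fml0"
  | Conj0 "'ag fml0" "'ag fml0"
  | Tri 'ag grade1 "'ag fml0"

datatype 'ag fml =
    Base "'ag fml0"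
  | Neg "'ag fml"
  | Conj "'ag fml" "'ag fml"
  | Box "'ag grp" nat "'ag fml"

definition gsum :: "('a \<Rightarrow> enat) \<Rightarrow> 'a set \<Rightarrow> enat" where
  "gsum f A = (if finite {x\<in>A. f x \<noteq> 0} \<and> (\<forall>x\<in>A. f x \<noteq> \<infinity>)
               then sum f {x\<in>A. f x \<noteq> 0} else \<infinity>)"

fun sat0 :: "(nat \<Rightarrow> bool) \<Rightarrow> ('ag \<Rightarrow> 'ag fml0 \<Rightarrow> enat) \<Rightarrow> 'ag fml0 \<Rightarrow> bool" where
  "sat0 val bel (Atom p) = val p"
| "sat0 val bel (Neg0 a) = (\<not> sat0 val bel a)"
| "sat0 val bel (Conj0 a b) = (sat0 val bel a \<and> sat0 val bel b)"
| "sat0 val bel (Tri i k a) = (bel i a \<ge> Rep_grade1 k)"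

text \<open>MAGBM states: belief multisets for each agent, and a valuation.\<close>
type_synonym 'ag state = "('ag \<Rightarrow> 'ag fml0 \<Rightarrow> enat) \<times> nat set"

definition state_sat0 :: "'ag state \<Rightarrow> 'ag fml0 \<Rightarrow> bool" where
  "state_sat0 S a = sat0 (\<lambda>p. p \<in> snd S) (fst S) a"

definition bel_grp :: "'ag state \<Rightarrow> 'ag grp \<Rightarrow> 'ag fml0 \<Rightarrow> enat" where
  "bel_grp S J a = (\<Sum>i\<in>Rep_grp J. fst S i a)"

definition R_rel :: "'ag grp \<Rightarrow> nat \<Rightarrow> 'ag state \<Rightarrow> 'ag state \<Rightarrow> bool" where
  "R_rel J k S S' = (gsum (bel_grp S J) {a. \<not> state_sat0 S' a} \<le> enat k)"

fun msat :: "'ag state \<Rightarrow> 'ag state set \<Rightarrow> 'ag fml \<Rightarrow> bool" where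
  "msat S U (Base a) = state_sat0 S a"
| "msat S U (Neg f) = (\<not> msat S U f)"
| "msat S U (Conj f g) = (msat S U f \<and> msat S U g)"
| "msat S U (Box J k f) = (\<forall>S'\<in>U. R_rel J k S S' \<longrightarrow> msat S' U f)"

record ('w, 'ag) model =
  W :: "'w set"
  D :: "'ag \<Rightarrow> 'w \<Rightarrow> 'ag fml0 \<Rightarrow> enat"
  rho :: "'ag grp \<Rightarrow> 'w \<Rightarrow> 'w \<Rightarrow> enat"
  Val :: "nat \<Rightarrow> 'w set"

definition model_sat0 :: "('w, 'ag) model \<Rightarrow> 'w \<Rightarrow> 'ag fml0 \<Rightarrow> bool" where
  "model_sat0 M w a = sat0 (\<lambda>p. w \<in> Val M p) (\<lambda>i. D M i w) a"

fun ksat :: "('w, 'ag) model \<Rightarrow> 'w \<Rightarrow> 'ag fml \<Rightarrow> bool" where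
  "ksat M w (Base a) = model_sat0 M w a"
| "ksat M w (Neg f) = (\<not> ksat M w f)"
| "ksat M w (Conj f g) = (ksat M w f \<and> ksat M w g)"
| "ksat M w (Box J k f) = (\<forall>u\<in>W M. rho M J w u \<le> enat k \<longrightarrow> ksat M u f)"

definition qngdm :: "('w, 'ag) model \<Rightarrow> bool" where
  "qngdm M \<longleftrightarrow>
     (\<forall>p. Val M p \<subseteq> W M) \<and>
     (\<forall>J. \<forall>w\<in>W M. \<forall>u\<in>W M. rho M J w u \<noteq> \<infinity> \<longrightarrow>
        rho M J w u \<ge> gsum (\<lambda>a. \<Sum>i\<in>Rep_grp J. D M i w a) {a. \<not> model_sat0 M u a}
      \<and> (\<exists>\<delta> :: 'ag \<Rightarrow> nat. enat (\<Sum>i\<in>Rep_grp J. \<delta> i) = rho M J w u \<and>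
           (\<forall>J'. Rep_grp J' \<subset> Rep_grp J \<longrightarrow>
                 enat (\<Sum>i\<in>Rep_grp J'. \<delta> i) \<ge> rho M J' w u)))"

end

theory Submission
  imports Defs
begin

lemma gsum_add:
  fixes f g :: "'a \<Rightarrow> enat"
  shows "gsum (\<lambda>a. f a + g a) A = gsum f A + gsum g A"
proof (cases "finite {x\<in>A. f x \<noteq> 0} \<and> (\<forall>x\<in>A. f x \<noteq> \<infinity>) \<and> finite {x\<in>A. g x \<noteq> 0} \<and> (\<forall>x\<in>A. g x \<noteq> \<infinity>)")
  case True
  let ?F = "{x\<in>A. f x \<noteq> 0}" and ?G = "{x\<in>A. g x \<noteq> 0}" and ?H = "{x\<in>A. f x + g x \<noteq> 0}"
  have H: "?H = ?F \<union> ?G" by auto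
  have fin: "finite ?H" using True H by simp
  have ninf: "\<forall>x\<in>A. f x + g x \<noteq> \<infinity>" using True by (auto simp: plus_eq_infty_iff_enat)
  have "gsum (\<lambda>a. f a + g a) A = sum (\<lambda>a. f a + g a) (?F \<union> ?G)"
    unfolding gsum_def using fin ninf H by simp
  also have "\<dots> = sum f (?F \<union> ?G) + sum g (?F \<union> ?G)" by (simp add: sum.distrib)
  also have "sum f (?F \<union> ?G) = sum f ?F"
    by (rule sum.mono_neutral_right) (use True in auto)
  also have "sum g (?F \<union> ?G) = sum g ?G"
    by (rule sum.mono_neutral_right) (use True in auto)
  finally show ?thesis unfolding gsum_def using True by simp
next
  case False
  have sub1: "{x\<in>A. f x \<noteq> 0} \<subseteq> {x\<in>A. f x + g x \<noteq> 0}" by auto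
  have sub2: "{x\<in>A. g x \<noteq> 0} \<subseteq> {x\<in>A. f x + g x \<noteq> 0}" by auto
  have "\<not> (finite {x\<in>A. f x + g x \<noteq> 0} \<and> (\<forall>x\<in>A. f x + g x \<noteq> \<infinity>))"
    using False finite_subset[OF sub1] finite_subset[OF sub2] by (metis plus_eq_infty_iff_enat)
  hence L: "gsum (\<lambda>a. f a + g a) A = \<infinity>" unfolding gsum_def by (rule if_not_P)
  have "gsum f A = \<infinity> \<or> gsum g A = \<infinity>" using False unfolding gsum_def by auto
  thus ?thesis using L by auto
qed

lemma gsum_zero: "gsum (\<lambda>a. 0::enat) A = 0"
  unfolding gsum_def by simp

lemma gsum_sum:
  fixes f :: "'i \<Rightarrow> 'a \<Rightarrow> enat"
  assumes "finite I"
  shows "gsum (\<lambda>a. \<Sum>i\<in>I. f i a) A = (\<Sum>i\<in>I. gsum (f i) A)"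
  using assms
proof (induction I rule: finite_induct)
  case empty then show ?case by (simp add: gsum_zero)
next
  case (insert x F)
  then show ?case by (simp add: gsum_add)
qed

theorem lemma4:
  fixes \<phi> :: "('ag::finite) fml" and S :: "'ag state" and U :: "'ag state set"
  assumes "msat S U \<phi>"
  shows "\<exists>(M :: ('ag state, 'ag) model) w. qngdm M \<and> w \<in> W M \<and> ksat M w \<phi>"
proof -
  define M :: "('ag state, 'ag) model" where
    "M = \<lparr> W = insert S U, D = (\<lambda>i w a. fst w i a),
           rho = (\<lambda>J w u. if u \<in> U then gsum (bel_grp w J) {a. \<not> state_sat0 u a} else \<infinity>),
           Val = (\<lambda>p. {w \<in> insert S U. p \<in> snd w}) \<rparr>"
  have ms: "model_sat0 M u a = state_sat0 u a" if "u \<in> W M" for u a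
  proof -
    have "(\<lambda>p. u \<in> Val M p) = (\<lambda>p. p \<in> snd u)" using that by (auto simp: M_def)
    moreover have "(\<lambda>i. D M i u) = fst u" by (auto simp: M_def)
    ultimately show ?thesis unfolding model_sat0_def state_sat0_def by simp
  qed
  have truth: "ksat M w f = msat w U f" if "w \<in> W M" for w f
    using that
  proof (induction f arbitrary: w)
    case (Base x) then show ?case by (simp add: ms)
  next
    case (Neg f) then show ?case by simp
  next
    case (Conj f1 f2) then show ?case by simp
  next
    case (Box J k f)
    have "(\<forall>u\<in>W M. rho M J w u \<le> enat k \<longrightarrow> ksat M u f) =
          (\<forall>u\<in>U. R_rel J k w u \<longrightarrow> msat u U f)"
      using Box.IH by (auto simp: M_def R_rel_def)
    then show ?case by simp
  qed
  have gs: "gsum (bel_grp w J) A = (\<Sum>i\<in>Rep_grp J. gsum (\<lambda>a. fst w i a) A)" for w :: "'ag state" and J A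
    unfolding bel_grp_def by (rule gsum_sum) simp
  have q: "qngdm M"
    unfolding qngdm_def
  proof (intro conjI allI ballI impI)
    fix p show "Val M p \<subseteq> W M" by (auto simp: M_def)
  next
    fix J w u assume w: "w \<in> W M" and u: "u \<in> W M" and ne: "rho M J w u \<noteq> \<infinity>"
    hence uU: "u \<in> U" by (auto simp: M_def split: if_splits)
    have set: "{a. \<not> model_sat0 M u a} = {a. \<not> state_sat0 u a}" using ms[OF u] by simp
    have rr: "rho M J' w u = (\<Sum>i\<in>Rep_grp J'. gsum (\<lambda>a. fst w i a) {a. \<not> state_sat0 u a})" for J'
      using uU by (simp add: M_def gs)
    show "gsum (\<lambda>a. \<Sum>i\<in>Rep_grp J. D M i w a) {a. \<not> model_sat0 M u a} \<le> rho M J w u"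
    proof -
      have "bel_grp w J = (\<lambda>a. \<Sum>i\<in>Rep_grp J. D M i w a)"
        by (rule ext) (simp add: bel_grp_def M_def)
      thus ?thesis using uU set by (simp add: M_def)
    qed
    define g where "g i = gsum (\<lambda>a. fst w i a) {a. \<not> state_sat0 u a}" for i
    have gfin: "g i \<noteq> \<infinity>" if "i \<in> Rep_grp J" for i
    proof
      assume "g i = \<infinity>"
      hence "(\<Sum>i\<in>Rep_grp J. g i) = \<infinity>"
        using that by (simp add: sum.remove[of "Rep_grp J" i])
      thus False using ne rr g_def by simp
    qed
    define \<delta> where "\<delta> i = the_enat (g i)" for i
    have sd: "enat (\<Sum>i\<in>Rep_grp J'. \<delta> i) = rho M J' w u" if "Rep_grp J' \<subseteq> Rep_grp J" for J'
    proof -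
      have "enat (\<Sum>i\<in>Rep_grp J'. \<delta> i) = (\<Sum>i\<in>Rep_grp J'. enat (\<delta> i))"
        using of_nat_sum[of \<delta> "Rep_grp J'", where 'a=enat] by (simp add: of_nat_eq_enat)
      also have "\<dots> = (\<Sum>i\<in>Rep_grp J'. g i)"
      proof (rule sum.cong)
        fix x assume "x \<in> Rep_grp J'"
        hence "g x \<noteq> \<infinity>" using gfin that by blast
        thus "enat (\<delta> x) = g x" unfolding \<delta>_def by (cases "g x") auto
      qed simp
      finally show ?thesis using rr g_def by simp
    qed
    show "\<exists>\<delta>::'ag\<Rightarrow>nat. enat (\<Sum>i\<in>Rep_grp J. \<delta> i) = rho M J w u \<and>
           (\<forall>J'. Rep_grp J' \<subset> Rep_grp J \<longrightarrow> rho M J' w u \<le> enat (\<Sum>i\<in>Rep_grp J'. \<delta> i))"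
      by (rule exI[of _ \<delta>]) (use sd in auto)
  qed
  have "S \<in> W M" by (simp add: M_def)
  thus ?thesis using q truth assms by blast
qed

end
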